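(* Let $R$ be a $d\times d$ expansive integer matrix, $B\subset\mathbb{Z}^d$ finite with $0\in B$, $N:=|B|$, $L\subset\mathbb{Z}^d$ finite with $0\in L$, and $(\alpha_l)_{l\in L}$ nonzero complex numbers such that the matrix $\frac{1}{\sqrt N}\left(e^{2\pi i (R^T)^{-1}l\cdot b}\alpha_l\right)_{l\in L,b\in B}$ has orthonormal columns. Then: (i) $N\le\#[L]$; (ii) for every $l_0\in L$, $\sum_{l\in L,\ l\in[l_0]}|\alpha_l|^2\le1$.
   Context: For $k\in\mathbb{Z}^d$, $[k]:=\{k'\in\mathbb{Z}^d : (k'-k)\cdot R^{-1}b\in\mathbb{Z}\text{ for all }b\in B\}$, and $[L]:=\{[l]: l\in L\}$ is the set of distinct classes of elements of $L$; $\#[L]$ is its cardinality. A matrix is expansive if all eigenvalues have modulus $>1$. *)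

theory Defs
  imports "HOL-Analysis.Analysis"
begin

text \<open>Integer vectors in Z^d are int^'n; dimension d = CARD('n).\<close>

definition rvec :: "int^'n \<Rightarrow> real^'n" where
  "rvec v = (\<chi> i. real_of_int (v $ i))"

definition rmat :: "int^'n^'n \<Rightarrow> real^'n^'n" where
  "rmat R = (\<chi> i j. real_of_int (R $ i $ j))"

definition cmat :: "int^'n^'n \<Rightarrow> complex^'n^'n" where
  "cmat R = (\<chi> i j. complex_of_int (R $ i $ j))"

definition expansive :: "int^'n^'n \<Rightarrow> bool" where
  "expansive R \<longleftrightarrow>
     (\<forall>z::complex. det (mat z - cmat R) = 0 \<longrightarrow> norm z > 1)"

definition cls :: "int^'n^'n \<Rightarrow> (int^'n) set \<Rightarrow> int^'n \<Rightarrow> (int^'n) set" where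
  "cls R B k = {k'. \<forall>b\<in>B. (rvec (k' - k)) \<bullet> (matrix_inv (rmat R) *v rvec b) \<in> \<int>}"

end

theory Submission
  imports Defs
begin

lemma det_of_int_mat:
  fixes A :: "int^'n^'n"
  shows "det (\<chi> i j. (of_int (A$i$j) :: 'a::comm_ring_1)) = of_int (det A)"
  by (simp add: det_def of_int_sum of_int_prod)

lemma det_neg_mat:
  fixes A :: "'a::comm_ring_1^'n^'n"
  shows "det (\<chi> i j. - A$i$j) = (-1)^CARD('n) * det A"
proof -
  have "\<And>p. (\<Prod>i\<in>UNIV. - A $ i $ p i) = (-1)^CARD('n) * (\<Prod>i\<in>UNIV. A $ i $ p i)"
    by (simp add: prod.distrib[symmetric] prod_constant[symmetric] del: prod_constant)
  then show ?thesis by (simp add: det_def sum_distrib_left algebra_simps)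
qed

lemma expansive_invertible:
  fixes R :: "int^'n^'n"
  assumes "expansive R"
  shows "invertible (rmat R)"
proof -
  have e: "det (mat 0 - cmat R) \<noteq> 0"
    using assms unfolding expansive_def by (metis norm_zero zero_less_one not_less_iff_gr_or_eq order_less_imp_not_less)
  have "mat 0 - cmat R = (\<chi> i j. - (cmat R)$i$j)"
    by (simp add: vec_eq_iff mat_def)
  then have "det (mat 0 - cmat R) = (-1)^CARD('n) * det (cmat R)" by (simp add: det_neg_mat)
  moreover have "det (cmat R) = of_int (det R)" unfolding cmat_def by (rule det_of_int_mat)
  moreover have "det (rmat R) = of_int (det R)" unfolding rmat_def by (rule det_of_int_mat)
  ultimately show ?thesis using e by (simp add: invertible_det_nz)
qed

lemma matrix_inv_transpose:
  fixes A :: "'a::field^'n^'n"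
  assumes "invertible A"
  shows "matrix_inv (transpose A) = transpose (matrix_inv A)"
proof -
  have i: "A ** matrix_inv A = mat 1" "matrix_inv A ** A = mat 1"
    using assms unfolding invertible_def matrix_inv_def by (metis (mono_tags, lifting) someI_ex)+
  have t: "transpose A ** transpose (matrix_inv A) = mat 1" "transpose (matrix_inv A) ** transpose A = mat 1"
    using i by (metis matrix_transpose_mul transpose_mat)+
  have "invertible (transpose A)" using t unfolding invertible_def by blast
  then have j: "transpose A ** matrix_inv (transpose A) = mat 1"
    unfolding invertible_def matrix_inv_def by (metis (mono_tags, lifting) someI_ex)
  have "matrix_inv (transpose A) = (transpose (matrix_inv A) ** transpose A) ** matrix_inv (transpose A)"
    using t by simp
  also have "\<dots> = transpose (matrix_inv A)" using j by (simp add: matrix_mul_assoc[symmetric])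
  finally show ?thesis .
qed

lemma inner_inv:
  assumes "invertible (A::real^'n^'n)"
  shows "(matrix_inv (transpose A) *v x) \<bullet> y = x \<bullet> (matrix_inv A *v y)"
  by (simp add: matrix_inv_transpose[OF assms] dot_lmul_matrix)


theorem proposition3p9:
  fixes R :: "int^'n^'n" and B L :: "(int^'n) set" and \<alpha> :: "int^'n \<Rightarrow> complex"
  assumes "expansive R"
    and "finite B" and "0 \<in> B"
    and "finite L" and "0 \<in> L"
    and "\<forall>l\<in>L. \<alpha> l \<noteq> 0"
    and "\<forall>b\<in>B. \<forall>b'\<in>B.
          (\<Sum>l\<in>L.
             ((1 / sqrt (real (card B))) *
               cis (2 * pi * ((matrix_inv (transpose (rmat R)) *v rvec l) \<bullet> rvec b)) * \<alpha> l)
           * cnj ((1 / sqrt (real (card B))) *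
               cis (2 * pi * ((matrix_inv (transpose (rmat R)) *v rvec l) \<bullet> rvec b')) * \<alpha> l))
          = (if b = b' then 1 else 0)"
  shows "card B \<le> card (cls R B ` L) \<and>
         (\<forall>l0\<in>L. (\<Sum>l\<in>{l\<in>L. l \<in> cls R B l0}. (norm (\<alpha> l))\<^sup>2) \<le> 1)"
proof -
  define N where "N = card B"
  define s :: real where "s = 1 / sqrt (real N)"
  define \<theta> where "\<theta> l b = 2 * pi * ((matrix_inv (transpose (rmat R)) *v rvec l) \<bullet> rvec b)" for l b
  define m where "m l b = complex_of_real s * cis (\<theta> l b) * \<alpha> l" for l b
  have Npos: "N > 0" unfolding N_def using assms(2,3) card_gt_0_iff by blast
  have s2: "s^2 = 1 / real N" unfolding s_def using Npos by (simp add: power_divide)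
  have orth: "\<And>b b'. b \<in> B \<Longrightarrow> b' \<in> B \<Longrightarrow> (\<Sum>l\<in>L. m l b * cnj (m l b')) = (if b = b' then 1 else 0)"
    using assms(7) unfolding m_def \<theta>_def s_def N_def by simp
  have inv: "invertible (rmat R)" using assms(1) by (rule expansive_invertible)
  have rv: "rvec (l - l0) = rvec l - rvec l0" for l l0 :: "int^'n"
    unfolding rvec_def by (simp add: vec_eq_iff)
  have key: "cis (\<theta> l b) = cis (\<theta> l0 b)" if "l \<in> cls R B l0" "b \<in> B" for l l0 b
  proof -
    let ?x = "rvec (l - l0) \<bullet> (matrix_inv (rmat R) *v rvec b)"
    have xi: "?x \<in> \<int>" using that unfolding cls_def by blast
    have "\<theta> l b = \<theta> l0 b + 2 * pi * ?x"
      unfolding \<theta>_def inner_inv[OF inv] rv by (simp add: inner_diff_left algebra_simps)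
    then have "cis (\<theta> l b) = cis (\<theta> l0 b) * cis (2 * pi * ?x)" by (simp add: cis_mult)
    then show ?thesis using xi by simp
  qed
  have cls_refl: "l \<in> cls R B l" for l proof -
    have "rvec (l - l) = 0" unfolding rvec_def by (simp add: vec_eq_iff)
    then show ?thesis unfolding cls_def by simp
  qed
  have part2: "(\<Sum>l\<in>{l\<in>L. l \<in> cls R B l0}. (norm (\<alpha> l))\<^sup>2) \<le> 1" if l0: "l0 \<in> L" for l0
  proof -
    define C where "C = {l\<in>L. l \<in> cls R B l0}"
    define x where "x b = cnj (cis (\<theta> l0 b))" for b
    define v where "v l = (\<Sum>b\<in>B. x b * m l b)" for l
    have x1: "x b * cnj (x b) = 1" for b unfolding x_def by (simp add: cis_cnj cis_mult)
    have "(\<Sum>l\<in>L. v l * cnj (v l)) = (\<Sum>l\<in>L. \<Sum>b\<in>B. \<Sum>b'\<in>B. x b * cnj (x b') * (m l b * cnj (m l b')))"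
      unfolding v_def cnj_sum sum_product by (simp add: algebra_simps)
    also have "\<dots> = (\<Sum>b\<in>B. \<Sum>b'\<in>B. x b * cnj (x b') * (\<Sum>l\<in>L. m l b * cnj (m l b')))"
      by (simp add: sum.swap[of _ L] sum_distrib_left)
    also have "\<dots> = (\<Sum>b\<in>B. \<Sum>b'\<in>B. x b * cnj (x b') * (if b = b' then 1 else 0))"
      by (intro sum.cong refl) (simp add: orth)
    also have "\<dots> = (\<Sum>b\<in>B. x b * cnj (x b))"
      using assms(2) by (simp add: if_distrib sum.delta cong: if_cong)
    also have "\<dots> = of_nat N" by (simp add: x1 N_def)
    finally have "(\<Sum>l\<in>L. v l * cnj (v l)) = of_nat N" .
    then have "complex_of_real (\<Sum>l\<in>L. (norm (v l))^2) = of_real (real N)"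
      by (simp only: of_real_sum complex_norm_square of_real_of_nat_eq)
    then have vL: "(\<Sum>l\<in>L. (norm (v l))^2) = real N" using of_real_eq_iff by blast
    have vC: "v l = of_real (real N * s) * \<alpha> l" if "l \<in> C" for l
    proof -
      have "v l = (\<Sum>b\<in>B. of_real s * \<alpha> l)"
        unfolding v_def
      proof (intro sum.cong refl)
        fix b assume "b \<in> B"
        then have "cis (\<theta> l b) = cis (\<theta> l0 b)" using key that unfolding C_def by blast
        then show "x b * m l b = of_real s * \<alpha> l"
          unfolding m_def x_def by (simp add: cis_cnj cis_mult)
      qed
      then show ?thesis by (simp add: N_def)
    qed
    have "real N * (\<Sum>l\<in>C. (norm (\<alpha> l))^2) = (\<Sum>l\<in>C. (norm (v l))^2)"
      unfolding sum_distrib_left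
    proof (intro sum.cong refl)
      fix l assume "l \<in> C"
      have "(norm (v l))^2 = (real N * s)^2 * (norm (\<alpha> l))^2"
        using vC[OF \<open>l \<in> C\<close>] by (simp add: norm_mult power_mult_distrib)
      also have "\<dots> = real N * (norm (\<alpha> l))^2" proof -
        have "(real N * s)^2 = real N" using s2 Npos by (simp add: power_mult_distrib power2_eq_square field_simps)
        then show ?thesis by simp
      qed
      finally show "real N * (norm (\<alpha> l))^2 = (norm (v l))^2" by simp
    qed
    also have "\<dots> \<le> (\<Sum>l\<in>L. (norm (v l))^2)"
      by (rule sum_mono2) (use assms(4) in \<open>auto simp: C_def\<close>)
    finally have "real N * (\<Sum>l\<in>C. (norm (\<alpha> l))^2) \<le> real N * 1" using vL by simp
    then show ?thesis using Npos unfolding C_def by (simp add: mult_le_cancel_left)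
  qed
  have total: "(\<Sum>l\<in>L. (norm (\<alpha> l))^2) = real N"
  proof -
    have "(\<Sum>l\<in>L. m l 0 * cnj (m l 0)) = 1" using orth assms(3) by simp
    moreover have "m l 0 * cnj (m l 0) = of_real (s^2 * (norm (\<alpha> l))^2)" for l
    proof -
      have "norm (m l 0) = \<bar>s\<bar> * norm (\<alpha> l)" by (simp add: m_def norm_mult)
      then have "(norm (m l 0))^2 = s^2 * (norm (\<alpha> l))^2" by (simp add: power_mult_distrib)
      then show ?thesis by (simp only: complex_norm_square[symmetric])
    qed
    ultimately have "complex_of_real (\<Sum>l\<in>L. s^2 * (norm (\<alpha> l))^2) = 1" by simp
    then have "(\<Sum>l\<in>L. s^2 * (norm (\<alpha> l))^2) = 1" using of_real_eq_1_iff by blast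
    then have "(\<Sum>l\<in>L. (norm (\<alpha> l))^2) / real N = 1" 
      by (simp add: s2 sum_divide_distrib[symmetric])
    then show ?thesis using Npos by (simp add: field_simps)
  qed
  have "real N = (\<Sum>c\<in>cls R B ` L. \<Sum>l\<in>{l\<in>L. cls R B l = c}. (norm (\<alpha> l))^2)"
    using total sum.group[of L "cls R B ` L" "cls R B" "\<lambda>l. (norm (\<alpha> l))^2"] assms(4) by simp
  also have "\<dots> \<le> (\<Sum>c\<in>cls R B ` L. 1)"
  proof (rule sum_mono)
    fix c assume "c \<in> cls R B ` L"
    then obtain l0 where l0: "l0 \<in> L" "c = cls R B l0" by blast
    have "(\<Sum>l\<in>{l\<in>L. cls R B l = c}. (norm (\<alpha> l))^2) \<le> (\<Sum>l\<in>{l\<in>L. l \<in> cls R B l0}. (norm (\<alpha> l))^2)"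
      by (rule sum_mono2) (use assms(4) cls_refl l0 in auto)
    then show "(\<Sum>l\<in>{l\<in>L. cls R B l = c}. (norm (\<alpha> l))^2) \<le> 1" using part2[OF l0(1)] by linarith
  qed
  finally have "real N \<le> real (card (cls R B ` L))" by simp
  then show ?thesis using part2 unfolding N_def by simp
qed

end
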